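(* Let $\beta\in(0,1)$, $x^1\ge0$, and let $C:\mathbb{R}_+\to\mathbb{R}_+$ be increasing, strictly convex and continuously differentiable with $c=C'$, $\lim_{x\to\infty}c(x)=\infty$, and $c^{-1}$ the inverse of $c$ on its range. Let $\mathbb{P}$ be a probability distribution with nonnegative support, finite mean, and no atoms, and let $\boldsymbol{p},\boldsymbol{p}^1,\boldsymbol{p}^2,\ldots$ be i.i.d. with law $\mathbb{P}$. Fix price samples $p_1,\ldots,p_N$, let $\mu_N=\frac1N\sum_{i=1}^Np_i$, and define the SDP and MPC policies $$y_{\mathrm{S}}(x,p)=c^{-1}\Bigl(\bigl(\beta\tfrac1N\textstyle\sum_{i=1}^N(p_i-p)_+-(1-\beta)p\bigr)_{[c(0),c(x)]}\Bigr),\qquad y_{\mathrm{M}}(x,p)=c^{-1}\Bigl(\bigl(\beta(\mu_N-p)_+-(1-\beta)p\bigr)_{[c(0),c(x)]}\Bigr).$$ If $$c(x)\ge\beta\,\mathbb{E}_{\mathbb{P}}\bigl[\boldsymbol{p}\,\mathbb{1}\{\boldsymbol{p}>p^\star_{\mathrm{S}}(x)\}\bigr]\quad\forall x\in[0,x^1],$$ then $\bar V_{\mathrm{M}}(x)\ge\bar V_{\mathrm{S}}(x)$ for each $x\in[0,x^1]$.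
   Context: $(z)_{[a,b]}$ is the projection of $z$ onto $[a,b]$, $(z)_+=\max\{z,0\}$, $\mathbb{1}$ is the event indicator. For a policy $y\in\{y_{\mathrm{S}},y_{\mathrm{M}}\}$, $y(\infty,p)=\lim_{x\to\infty}y(x,p)$ is its target inventory level, and the minimum acceptable price $p^\star(x)$ is the highest price $p$ solving $y(\infty,p)=x$; $p^\star_{\mathrm{S}}$ denotes this for $y_{\mathrm{S}}$. The out-of-sample value of a policy $y$ from initial inventory $x$ is $\bar V_y(x)=\mathbb{E}_{\mathbb{P}^\infty}[\sum_{t=1}^\infty\beta^{t-1}(\boldsymbol{p}^t(x^t-x^{t+1})-C(x^{t+1}))]$ with $x^1=x$ and $x^{t+1}=y(x^t,\boldsymbol{p}^t)$; $\bar V_{\mathrm{S}}=\bar V_{y_{\mathrm{S}}}$ and $\bar V_{\mathrm{M}}=\bar V_{y_{\mathrm{M}}}$. *)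

theory Defs
  imports "HOL-Probability.Probability"
begin

definition strict_convex_on :: "real set \<Rightarrow> (real \<Rightarrow> real) \<Rightarrow> bool" where
  "strict_convex_on S f \<longleftrightarrow>
     (\<forall>x\<in>S. \<forall>y\<in>S. x \<noteq> y \<longrightarrow> (\<forall>u::real. 0 < u \<longrightarrow> u < 1 \<longrightarrow>
        f ((1 - u) * x + u * y) < (1 - u) * f x + u * f y))"

definition proj :: "real \<Rightarrow> real \<Rightarrow> real \<Rightarrow> real" where
  "proj a b z = max a (min b z)"

definition pos :: "real \<Rightarrow> real" where
  "pos z = max z 0"

definition cinv :: "(real \<Rightarrow> real) \<Rightarrow> real \<Rightarrow> real" where
  "cinv c = inv_into {0..} c"

definition y_S :: "(real \<Rightarrow> real) \<Rightarrow> real \<Rightarrow> nat \<Rightarrow> (nat \<Rightarrow> real) \<Rightarrow> real \<Rightarrow> real \<Rightarrow> real" where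
  "y_S c \<beta> N ps x p =
     cinv c (proj (c 0) (c x)
       (\<beta> * ((\<Sum>i<N. pos (ps i - p)) / real N) - (1 - \<beta>) * p))"

definition mu :: "nat \<Rightarrow> (nat \<Rightarrow> real) \<Rightarrow> real" where
  "mu N ps = (\<Sum>i<N. ps i) / real N"

definition y_M :: "(real \<Rightarrow> real) \<Rightarrow> real \<Rightarrow> nat \<Rightarrow> (nat \<Rightarrow> real) \<Rightarrow> real \<Rightarrow> real \<Rightarrow> real" where
  "y_M c \<beta> N ps x p =
     cinv c (proj (c 0) (c x) (\<beta> * pos (mu N ps - p) - (1 - \<beta>) * p))"

text \<open>Target inventory level y(\<infinity>,p) = lim_{x\<rightarrow>\<infinity>} y(x,p).\<close>
definition target :: "(real \<Rightarrow> real \<Rightarrow> real) \<Rightarrow> real \<Rightarrow> real" where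
  "target y p = Lim at_top (\<lambda>x. y x p)"

text \<open>Minimum acceptable price: the highest p with y(\<infinity>,p) = x, taken as a supremum
  in the extended reals (it is +\<infinity> when the solution set is unbounded above, e.g. x = 0).\<close>
definition pstar :: "(real \<Rightarrow> real \<Rightarrow> real) \<Rightarrow> real \<Rightarrow> ereal" where
  "pstar y x = Sup {ereal p | p. target y p = x}"

text \<open>Inventory path: inv_path y x \<omega> 0 = x^1 = x, inv_path y x \<omega> (t+1) = y(x^t, p^t),
  where the price of period t+1 is \<omega> t.\<close>
primrec inv_path :: "(real \<Rightarrow> real \<Rightarrow> real) \<Rightarrow> real \<Rightarrow> (nat \<Rightarrow> real) \<Rightarrow> nat \<Rightarrow> real" where
  "inv_path y x \<omega> 0 = x"
| "inv_path y x \<omega> (Suc t) = y (inv_path y x \<omega> t) (\<omega> t)"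

definition Vbar :: "real measure \<Rightarrow> real \<Rightarrow> (real \<Rightarrow> real) \<Rightarrow> (real \<Rightarrow> real \<Rightarrow> real) \<Rightarrow> real \<Rightarrow> real" where
  "Vbar P \<beta> C y x =
     integral\<^sup>L (PiM UNIV (\<lambda>_::nat. P))
       (\<lambda>\<omega>. \<Sum>t. \<beta> ^ t * (\<omega> t * (inv_path y x \<omega> t - inv_path y x \<omega> (Suc t))
                           - C (inv_path y x \<omega> (Suc t))))"

end

theory Submission
  imports Defs
begin


lemma sc_convex_on:
  assumes "strict_convex_on {0..} C"
  shows "convex_on {0..} C"
proof (rule convex_onI)
  fix t x y :: real assume t: "0 < t" "t < 1" and xy: "x \<in> {0..}" "y \<in> {0..}"
  show "C ((1 - t) *\<^sub>R x + t *\<^sub>R y) \<le> (1 - t) * C x + t * C y"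
  proof (cases "x = y")
    case True then show ?thesis by (simp add: algebra_simps)
  next
    case False
    have sc: "\<And>x y u. x \<in> {0..} \<Longrightarrow> y \<in> {0..} \<Longrightarrow> x \<noteq> y \<Longrightarrow> 0 < u \<Longrightarrow> u < 1 \<Longrightarrow>
      C ((1 - u) * x + u * y) < (1 - u) * C x + u * C y"
      using assms unfolding strict_convex_on_def by blast
    have "C ((1 - t) * x + t * y) < (1 - t) * C x + t * C y"
      by (rule sc) (use t xy False in auto)
    then show ?thesis by simp
  qed
qed (simp add: convex_real_interval)

lemma tangent_pos:
  assumes cv: "strict_convex_on {0..} C"
    and D: "\<forall>x\<ge>0. (C has_real_derivative c x) (at x within {0..})"
    and a: "0 < a" and b: "0 \<le> b"
  shows "c a * (b - a) \<le> C b - C a"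
proof -
  have "interior {0::real..} = {0<..}" by simp
  then have "a \<in> interior {0::real..}" using a by simp
  then show ?thesis
    using convex_on_imp_above_tangent[OF sc_convex_on[OF cv] _ _ _ D[rule_format, of a]] a b
    by (simp add: convex_connected convex_real_interval)
qed

lemma tangent0:
  assumes cv: "strict_convex_on {0..} C"
    and D: "\<forall>x\<ge>0. (C has_real_derivative c x) (at x within {0..})"
    and cc: "continuous_on {0..} c"
    and b: "0 \<le> b"
  shows "c 0 * (b - 0) \<le> C b - C 0"
proof (cases "b = 0")
  case True then show ?thesis by simp
next
  case False
  with b have b: "0 < b" by simp
  have Cc: "continuous (at 0 within {0..}) C" using D[rule_format, of 0] by (auto intro: DERIV_continuous)
  have cc0: "continuous (at 0 within {0..}) c" using cc
    by (simp add: continuous_on_eq_continuous_within)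
  have F: "at_right (0::real) \<le> at 0 within {0..}"
    by (rule at_le) auto
  have l1: "((\<lambda>e. c e * (b - e)) \<longlongrightarrow> c 0 * (b - 0)) (at_right 0)"
    apply (intro tendsto_intros)
    using cc0 F by (auto simp: continuous_within intro: tendsto_mono)
  have l2: "((\<lambda>e. C b - C e) \<longlongrightarrow> C b - C 0) (at_right 0)"
    apply (intro tendsto_intros)
    using Cc F by (auto simp: continuous_within intro: tendsto_mono)
  have ev: "eventually (\<lambda>e. c e * (b - e) \<le> C b - C e) (at_right (0::real))"
    using eventually_at_right_real[OF b]
    by eventually_elim (auto intro: tangent_pos[OF cv D])
  show ?thesis
    by (rule tendsto_le[OF _ l2 l1 ev]) simp
qed

lemma tangent:
  assumes cv: "strict_convex_on {0..} C"
    and D: "\<forall>x\<ge>0. (C has_real_derivative c x) (at x within {0..})"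
    and cc: "continuous_on {0..} c"
    and a: "0 \<le> a" and b: "0 \<le> b"
  shows "c a * (b - a) \<le> C b - C a"
  using tangent_pos[OF cv D _ b, of a] tangent0[OF cv D cc b] a
  by (cases "a = 0") auto

lemma c_strict_mono:
  assumes cv: "strict_convex_on {0..} C"
    and D: "\<forall>x\<ge>0. (C has_real_derivative c x) (at x within {0..})"
    and cc: "continuous_on {0..} c"
    and a: "0 \<le> a" and ab: "a < b"
  shows "c a < c b"
proof -
  define m where "m = (a + b) / 2"
  have m: "0 < m" "a < m" "m < b" using a ab by (auto simp: m_def)
  have 1: "c a * (m - a) \<le> C m - C a" using tangent[OF cv D cc a, of m] m by simp
  have 2: "c b * (m - b) \<le> C m - C b" using tangent[OF cv D cc, of b m] m by simp
  have sc: "\<And>x y u. x \<in> {0..} \<Longrightarrow> y \<in> {0..} \<Longrightarrow> x \<noteq> y \<Longrightarrow> 0 < u \<Longrightarrow> u < 1 \<Longrightarrow>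
      C ((1 - u) * x + u * y) < (1 - u) * C x + u * C y"
    using cv unfolding strict_convex_on_def by blast
  have "C ((1 - 1/2) * a + 1/2 * b) < (1 - 1/2) * C a + 1/2 * C b"
    by (rule sc) (use a ab in auto)
  then have 3: "C m < (C a + C b) / 2" unfolding m_def by (simp add: add_divide_distrib)
  define Ka where "Ka = c a * (b - a)"
  define Kb where "Kb = c b * (b - a)"
  have e1: "c a * (m - a) = Ka / 2" by (simp add: m_def Ka_def field_simps)
  have e2: "c b * (m - b) = - (Kb / 2)" by (simp add: m_def Kb_def field_simps)
  have h1: "Ka / 2 \<le> C m - C a" using 1 unfolding e1 .
  have h2: "- (Kb / 2) \<le> C m - C b" using 2 unfolding e2 .
  have "Ka < C b - C a" using h1 3 by (simp add: field_simps)
  moreover have "C b - C a < Kb" using h2 3 by (simp add: field_simps)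
  ultimately have "Ka < Kb" by linarith
  then have "c a * (b - a) < c b * (b - a)" by (simp add: Ka_def Kb_def)
  then show ?thesis using ab by simp
qed



locale pol_model =
  fixes P :: "real measure" and \<beta> :: real and C :: "real \<Rightarrow> real" and T :: "real \<Rightarrow> real"
  assumes P_prob: "prob_space P" and P_sets: "sets P = sets borel"
    and beta0: "0 < \<beta>" and beta1: "\<beta> < 1"
    and C_nonneg: "\<And>x. 0 \<le> C x" and C_mono: "mono C"
    and C_meas[measurable]: "C \<in> borel_measurable borel"
    and P_int: "integrable P (\<lambda>p. p)"
    and T_meas[measurable]: "T \<in> borel_measurable borel" and T_nonneg: "\<And>p. 0 \<le> T p"
begin

abbreviation Om where "Om \<equiv> PiM UNIV (\<lambda>_::nat. P)"

definition pol :: "real \<Rightarrow> real \<Rightarrow> real" where "pol x p = min x (T p)"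

abbreviation path where "path x \<omega> t \<equiv> inv_path pol x \<omega> t"

definition r :: "nat \<Rightarrow> real \<Rightarrow> (nat \<Rightarrow> real) \<Rightarrow> real" where
  "r t x \<omega> = \<beta> ^ t * (\<omega> t * (path x \<omega> t - path x \<omega> (Suc t)) - C (path x \<omega> (Suc t)))"

definition e where "e t x = (\<integral>\<omega>. r t x \<omega> \<partial>Om)"
definition V where "V x = Vbar P \<beta> C pol x"
definition Vn where "Vn n x = (\<Sum>t<n. e t x)"
definition M1 where "M1 = (\<integral>p. \<bar>p\<bar> \<partial>P)"

lemma Om_prob: "prob_space Om"
  by (rule prob_space_PiM) (simp add: P_prob)

lemma Q: "sequence_space P"
  unfolding sequence_space_def product_prob_space_def product_prob_space_axioms_def
    product_sigma_finite_def
  by (simp add: P_prob prob_space_imp_sigma_finite)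

lemma P_fin: "finite_measure P"
  using P_prob prob_space_def by blast

lemma M1_nonneg: "0 \<le> M1"
  unfolding M1_def by simp

lemma P_int_abs: "integrable P (\<lambda>p. \<bar>p\<bar>)"
  using P_int by simp

lemma T_measP[measurable]: "T \<in> borel_measurable P"
  using measurable_cong_sets[OF P_sets refl] T_meas by blast

lemma id_measP[measurable]: "(\<lambda>p. p) \<in> borel_measurable P"
proof -
  have "(\<lambda>p::real. p) \<in> borel_measurable borel" by simp
  then show ?thesis using measurable_cong_sets[OF P_sets refl] by blast
qed

lemma comp_meas[measurable]: "(\<lambda>\<omega>. \<omega> t) \<in> borel_measurable Om"
proof -
  have "(\<lambda>\<omega>. \<omega> t) \<in> measurable Om P" by (rule measurable_component_singleton) simp
  then show ?thesis using measurable_cong_sets[OF refl P_sets] by blast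
qed

lemma pol_meas[measurable (raw)]:
  assumes [measurable]: "f \<in> borel_measurable M" "g \<in> borel_measurable M"
  shows "(\<lambda>x. pol (f x) (g x)) \<in> borel_measurable M"
  unfolding pol_def by measurable

lemma path_meas[measurable (raw)]:
  assumes f[measurable]: "f \<in> borel_measurable M" and g[measurable]: "g \<in> measurable M Om"
  shows "(\<lambda>x. path (f x) (g x) t) \<in> borel_measurable M"
proof (induction t)
  case 0 then show ?case by simp
next
  case (Suc t)
  note Suc[measurable]
  have [measurable]: "(\<lambda>x. g x t) \<in> borel_measurable M"
    using measurable_compose[OF g comp_meas] by simp
  show ?case by simp
qed

lemma r_meas[measurable (raw)]:
  assumes f[measurable]: "f \<in> borel_measurable M" and g[measurable]: "g \<in> measurable M Om"
  shows "(\<lambda>x. r t (f x) (g x)) \<in> borel_measurable M"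
proof -
  have [measurable]: "(\<lambda>x. g x t) \<in> borel_measurable M"
    using measurable_compose[OF g comp_meas] by simp
  show ?thesis unfolding r_def by measurable
qed

lemma pol_bounds: "0 \<le> x \<Longrightarrow> 0 \<le> pol x p \<and> pol x p \<le> x"
  using T_nonneg[of p] by (simp add: pol_def)

lemma path_bounds: "0 \<le> x \<Longrightarrow> 0 \<le> path x \<omega> t \<and> path x \<omega> t \<le> x"
proof (induction t)
  case 0 then show ?case by simp
next
  case (Suc t) then show ?case using pol_bounds[of "path x \<omega> t" "\<omega> t"] by auto
qed

lemma path_dec: "path x \<omega> (Suc t) \<le> path x \<omega> t"
  by (simp add: pol_def)

lemma path_shift: "path x (case_nat p \<omega>) (Suc t) = path (pol x p) \<omega> t"
  by (induction t) auto

lemma r_shift: "r (Suc t) x (case_nat p \<omega>) = \<beta> * r t (pol x p) \<omega>"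
  unfolding r_def using path_shift[of x p \<omega> t] path_shift[of x p \<omega> "Suc t"]
  by (simp add: algebra_simps)

lemma r0: "r 0 x \<omega> = \<omega> 0 * (x - pol x (\<omega> 0)) - C (pol x (\<omega> 0))"
  unfolding r_def by simp

lemma r_bound:
  assumes x: "0 \<le> x"
  shows "\<bar>r t x \<omega>\<bar> \<le> \<beta> ^ t * (\<bar>\<omega> t\<bar> * x + C x)"
proof -
  let ?a = "path x \<omega> t" and ?b = "path x \<omega> (Suc t)"
  have ab: "0 \<le> ?a - ?b" "?a - ?b \<le> x" "0 \<le> ?b" "?b \<le> x"
    using path_bounds[OF x, of \<omega> t] path_bounds[OF x, of \<omega> "Suc t"] path_dec[of x \<omega> t] by auto
  have "\<bar>\<omega> t * (?a - ?b)\<bar> \<le> \<bar>\<omega> t\<bar> * x"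
    using ab by (simp add: abs_mult mult_left_mono)
  moreover have "\<bar>C ?b\<bar> \<le> C x" using C_nonneg C_mono ab by (simp add: monoD)
  ultimately have "\<bar>\<omega> t * (?a - ?b) - C ?b\<bar> \<le> \<bar>\<omega> t\<bar> * x + C x" by linarith
  then show ?thesis unfolding r_def using beta0
    by (simp add: abs_mult mult_left_mono)
qed

lemma coord_distr: "distr Om P (\<lambda>\<omega>. \<omega> t) = P"
  by (rule distr_PiM_component) (auto simp: P_prob)

lemma coord_integrable: "integrable Om (\<lambda>\<omega>. \<bar>\<omega> t\<bar>)"
proof -
  have m: "(\<lambda>\<omega>. \<omega> t) \<in> measurable Om P" by (rule measurable_component_singleton) simp
  have "integrable (distr Om P (\<lambda>\<omega>. \<omega> t)) (\<lambda>p. \<bar>p\<bar>)" using coord_distr P_int_abs by simp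
  then show ?thesis using integrable_distr_eq[OF m, of "\<lambda>p. \<bar>p\<bar>"] by simp
qed

lemma coord_integral: "(\<integral>\<omega>. \<bar>\<omega> t\<bar> \<partial>Om) = M1"
proof -
  have m: "(\<lambda>\<omega>. \<omega> t) \<in> measurable Om P" by (rule measurable_component_singleton) simp
  have "(\<integral>p. \<bar>p\<bar> \<partial>distr Om P (\<lambda>\<omega>. \<omega> t)) = (\<integral>\<omega>. \<bar>\<omega> t\<bar> \<partial>Om)"
    by (rule integral_distr[OF m]) simp
  then show ?thesis using coord_distr M1_def by simp
qed

lemma r_integrable: "0 \<le> x \<Longrightarrow> integrable Om (r t x)"
proof -
  assume x: "0 \<le> x"
  interpret O: prob_space Om by (rule Om_prob)
  have "integrable Om (\<lambda>\<omega>. \<beta> ^ t * (\<bar>\<omega> t\<bar> * x + C x))"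
    using coord_integrable by simp
  then show ?thesis
    by (rule Bochner_Integration.integrable_bound) (auto simp: r_bound[OF x] intro!: AE_I2 order.trans[OF r_bound[OF x]])
qed

lemma r_abs_int: "0 \<le> x \<Longrightarrow> (\<integral>\<omega>. \<bar>r t x \<omega>\<bar> \<partial>Om) \<le> \<beta> ^ t * (M1 * x + C x)"
proof -
  assume x: "0 \<le> x"
  interpret O: prob_space Om by (rule Om_prob)
  have "(\<integral>\<omega>. \<bar>r t x \<omega>\<bar> \<partial>Om) \<le> (\<integral>\<omega>. \<beta> ^ t * (\<bar>\<omega> t\<bar> * x + C x) \<partial>Om)"
    using coord_integrable r_integrable[OF x]
    by (intro integral_mono) (auto simp: r_bound[OF x])
  also have "\<dots> = \<beta> ^ t * (M1 * x + C x)"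
    using coord_integrable coord_integral by (simp add: O.prob_space)
  finally show ?thesis .
qed

lemma e_bound: "0 \<le> x \<Longrightarrow> \<bar>e t x\<bar> \<le> \<beta> ^ t * (M1 * x + C x)"
proof -
  assume x: "0 \<le> x"
  have "\<bar>e t x\<bar> \<le> (\<integral>\<omega>. \<bar>r t x \<omega>\<bar> \<partial>Om)"
    unfolding e_def using integral_norm_bound[of Om "r t x"] by simp
  then show ?thesis using r_abs_int[OF x, of t] by linarith
qed

end



context pol_model
begin

lemma fubini_Om:
  fixes h :: "(nat \<Rightarrow> real) \<Rightarrow> real"
  assumes h: "integrable Om h"
  shows "(\<integral>\<omega>. h \<omega> \<partial>Om) = (\<integral>p. (\<integral>\<omega>. h (case_nat p \<omega>) \<partial>Om) \<partial>P)"
    and "integrable P (\<lambda>p. \<integral>\<omega>. h (case_nat p \<omega>) \<partial>Om)"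
proof -
  interpret Q: sequence_space P by (rule Q)
  interpret O: prob_space Om by (rule Om_prob)
  interpret PO: pair_sigma_finite P Om
    by (intro pair_sigma_finite.intro prob_space_imp_sigma_finite P_prob Om_prob)
  have hm[measurable]: "h \<in> borel_measurable Om" using h by simp
  define F where "F = (\<lambda>(s::real, \<omega>::nat \<Rightarrow> real). case_nat s \<omega>)"
  have fm[measurable]: "F \<in> measurable (P \<Otimes>\<^sub>M Om) Om"
    unfolding F_def by measurable
  have D: "distr (P \<Otimes>\<^sub>M Om) Om F = Om" unfolding F_def by (rule Q.PiM_iter)
  have "integrable (distr (P \<Otimes>\<^sub>M Om) Om F) h" using D h by simp
  then have hi: "integrable (P \<Otimes>\<^sub>M Om) (\<lambda>x. h (F x))"
    by (rule integrable_distr[OF fm])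
  have "(\<integral>\<omega>. h \<omega> \<partial>Om) = (\<integral>\<omega>. h \<omega> \<partial>distr (P \<Otimes>\<^sub>M Om) Om F)"
    using D by simp
  also have "\<dots> = (\<integral>x. h (F x) \<partial>(P \<Otimes>\<^sub>M Om))"
    by (rule integral_distr[OF fm hm])
  also have "\<dots> = (\<integral>p. (\<integral>\<omega>. h (F (p, \<omega>)) \<partial>Om) \<partial>P)"
    using PO.integral_fst'[OF hi] by simp
  finally show "(\<integral>\<omega>. h \<omega> \<partial>Om) = (\<integral>p. (\<integral>\<omega>. h (case_nat p \<omega>) \<partial>Om) \<partial>P)"
    by (simp add: F_def)
  have "integrable P (\<lambda>p. \<integral>\<omega>. h (F (p, \<omega>)) \<partial>Om)"
    using PO.integrable_fst'[OF hi] by simp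
  then   show "integrable P (\<lambda>p. \<integral>\<omega>. h (case_nat p \<omega>) \<partial>Om)"
    by (simp add: F_def)
qed

lemma e_Suc:
  assumes x: "0 \<le> x"
  shows "e (Suc t) x = \<beta> * (\<integral>p. e t (pol x p) \<partial>P)"
    and "integrable P (\<lambda>p. e t (pol x p))"
proof -
  have eq: "(\<integral>\<omega>. r (Suc t) x (case_nat p \<omega>) \<partial>Om) = \<beta> * e t (pol x p)" for p
    unfolding e_def r_shift by simp
  note F = fubini_Om[OF r_integrable[OF x, of "Suc t"]]
  show "e (Suc t) x = \<beta> * (\<integral>p. e t (pol x p) \<partial>P)"
    using F(1) unfolding eq e_def[of "Suc t"] by simp
  show "integrable P (\<lambda>p. e t (pol x p))"
    using F(2) beta0 unfolding eq by simp
qed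

lemma r0_integrable:
  assumes x: "0 \<le> x"
  shows "integrable P (\<lambda>p. p * (x - pol x p) - C (pol x p))"
proof -
  interpret PP: prob_space P by (rule P_prob)
  have "integrable P (\<lambda>p. \<bar>p\<bar> * x + C x)" using P_int_abs by simp
  then show ?thesis
  proof (rule Bochner_Integration.integrable_bound)
    show "(\<lambda>p. p * (x - pol x p) - C (pol x p)) \<in> borel_measurable P" by measurable
    show "AE p in P. norm (p * (x - pol x p) - C (pol x p)) \<le> norm (\<bar>p\<bar> * x + C x)"
    proof (rule AE_I2)
      fix p
      have b: "0 \<le> pol x p" "pol x p \<le> x" using pol_bounds[OF x] by auto
      have "\<bar>p * (x - pol x p)\<bar> \<le> \<bar>p\<bar> * x" using b by (simp add: abs_mult mult_left_mono)
      moreover have "\<bar>C (pol x p)\<bar> \<le> C x" using C_nonneg C_mono b by (simp add: monoD)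
      ultimately show "norm (p * (x - pol x p) - C (pol x p)) \<le> norm (\<bar>p\<bar> * x + C x)"
        using C_nonneg[of x] x by simp
    qed
  qed
qed

lemma e_0:
  assumes x: "0 \<le> x"
  shows "e 0 x = (\<integral>p. (p * (x - pol x p) - C (pol x p)) \<partial>P)"
proof -
  interpret O: prob_space Om by (rule Om_prob)
  have eq: "(\<integral>\<omega>. r 0 x (case_nat p \<omega>) \<partial>Om) = p * (x - pol x p) - C (pol x p)" for p
    unfolding r0 by (simp add: O.prob_space)
  show ?thesis using fubini_Om(1)[OF r_integrable[OF x, of 0]] unfolding eq e_def by simp
qed

lemma AE_summ: "AE \<omega> in Om. summable (\<lambda>t. \<beta> ^ t * \<bar>\<omega> t\<bar>)"
proof -
  have int: "integrable Om (\<lambda>\<omega>. \<beta> ^ t * \<bar>\<omega> t\<bar>)" for t using coord_integrable by simp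
  have each: "(\<integral>\<^sup>+\<omega>. ennreal (\<beta> ^ t * \<bar>\<omega> t\<bar>) \<partial>Om) = ennreal (\<beta> ^ t * M1)" for t
  proof -
    have "(\<integral>\<^sup>+\<omega>. ennreal (\<beta> ^ t * \<bar>\<omega> t\<bar>) \<partial>Om) = ennreal (\<integral>\<omega>. \<beta> ^ t * \<bar>\<omega> t\<bar> \<partial>Om)"
      using int beta0 by (intro nn_integral_eq_integral) auto
    then show ?thesis using coord_integral by simp
  qed
  have "(\<integral>\<^sup>+\<omega>. (\<Sum>t. ennreal (\<beta> ^ t * \<bar>\<omega> t\<bar>)) \<partial>Om) = (\<Sum>t. \<integral>\<^sup>+\<omega>. ennreal (\<beta> ^ t * \<bar>\<omega> t\<bar>) \<partial>Om)"
    by (rule nn_integral_suminf) measurable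
  also have "\<dots> = (\<Sum>t. ennreal (\<beta> ^ t * M1))" using each by simp
  also have "\<dots> = ennreal (\<Sum>t. \<beta> ^ t * M1)"
    using beta0 beta1 M1_nonneg
    by (intro suminf_ennreal2) (auto intro!: summable_mult2 summable_geometric)
  finally have "(\<integral>\<^sup>+\<omega>. (\<Sum>t. ennreal (\<beta> ^ t * \<bar>\<omega> t\<bar>)) \<partial>Om) \<noteq> \<infinity>" by simp
  then have "AE \<omega> in Om. (\<Sum>t. ennreal (\<beta> ^ t * \<bar>\<omega> t\<bar>)) \<noteq> \<infinity>"
    by (intro nn_integral_PInf_AE) measurable
  then show ?thesis
  proof (rule AE_mp, intro AE_I2 impI)
    fix \<omega> :: "nat \<Rightarrow> real" assume "(\<Sum>t. ennreal (\<beta> ^ t * \<bar>\<omega> t\<bar>)) \<noteq> \<infinity>"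
    then show "summable (\<lambda>t. \<beta> ^ t * \<bar>\<omega> t\<bar>)"
      using beta0 by (intro summable_suminf_not_top) auto
  qed
qed

lemma geo_summ: "summable (\<lambda>t. \<beta> ^ t * K)"
  using beta0 beta1 by (intro summable_mult2 summable_geometric) simp

lemma V_sums:
  assumes x: "0 \<le> x"
  shows "(\<lambda>t. e t x) sums V x"
proof -
  have V: "V x = (\<integral>\<omega>. (\<Sum>t. r t x \<omega>) \<partial>Om)"
    unfolding V_def Vbar_def r_def by simp
  have "(\<lambda>t. integral\<^sup>L Om (r t x)) sums (\<integral>\<omega>. (\<Sum>t. r t x \<omega>) \<partial>Om)"
  proof (rule sums_integral)
    show "integrable Om (r t x)" for t by (rule r_integrable[OF x])
    show "AE \<omega> in Om. summable (\<lambda>t. norm (r t x \<omega>))"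
      using AE_summ
    proof (rule AE_mp, intro AE_I2 impI)
      fix \<omega> :: "nat \<Rightarrow> real" assume s: "summable (\<lambda>t. \<beta> ^ t * \<bar>\<omega> t\<bar>)"
      have "summable (\<lambda>t. (\<beta> ^ t * \<bar>\<omega> t\<bar>) * x + \<beta> ^ t * C x)"
        by (intro summable_add summable_mult2 s geo_summ)
      then show "summable (\<lambda>t. norm (r t x \<omega>))"
        by (rule summable_comparison_test'[where N=0]) (use r_bound[OF x] in \<open>auto simp: algebra_simps\<close>)
    qed
    show "summable (\<lambda>t. \<integral>\<omega>. norm (r t x \<omega>) \<partial>Om)"
      by (rule summable_comparison_test'[OF geo_summ[of "M1 * x + C x"], where N=0])
         (use r_abs_int[OF x] in auto)
  qed
  then show ?thesis unfolding V e_def .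
qed

lemma K_mono: "0 \<le> y \<Longrightarrow> y \<le> x \<Longrightarrow> M1 * y + C y \<le> M1 * x + C x"
  using M1_nonneg C_mono by (simp add: add_mono mult_left_mono monoD)

lemma V_bound:
  assumes x: "0 \<le> x"
  shows "\<bar>V x\<bar> \<le> (M1 * x + C x) / (1 - \<beta>)"
proof -
  let ?K = "M1 * x + C x"
  have s0: "(\<lambda>t. \<beta> ^ t * ?K) sums (1 / (1 - \<beta>) * ?K)"
    using beta0 beta1 sums_mult2[OF geometric_sums[of \<beta>]] by simp
  have s: "(\<lambda>t. \<beta> ^ t * ?K) sums (?K / (1 - \<beta>))"
    using s0 by simp
  have "V x \<le> ?K / (1 - \<beta>)"
    using sums_le[OF _ V_sums[OF x] s] e_bound[OF x] by (meson abs_le_D1)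
  moreover have "- (?K / (1 - \<beta>)) \<le> V x"
    using sums_le[OF _ sums_minus[OF s] V_sums[OF x]] e_bound[OF x] by (meson abs_le_D2 minus_le_iff)
  ultimately show ?thesis by linarith
qed

lemma Vn_tendsto: "0 \<le> x \<Longrightarrow> (\<lambda>n. Vn n x) \<longlonglongrightarrow> V x"
  unfolding Vn_def using V_sums[of x] by (simp add: sums_def)

lemma e_comp_meas[measurable (raw)]:
  assumes [measurable]: "g \<in> borel_measurable P"
  shows "(\<lambda>p. e t (g p)) \<in> borel_measurable P"
proof -
  interpret O: prob_space Om by (rule Om_prob)
  have "case_prod (\<lambda>p \<omega>. r t (g p) \<omega>) \<in> borel_measurable (P \<Otimes>\<^sub>M Om)" by measurable
  then show ?thesis unfolding e_def by (rule O.borel_measurable_lebesgue_integral)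
qed

lemma V_comp:
  assumes g[measurable]: "g \<in> borel_measurable P" and gb: "\<And>p. 0 \<le> g p \<and> g p \<le> X"
  shows "integrable P (\<lambda>p. V (g p))"
    and "\<And>n. integrable P (\<lambda>p. Vn n (g p))"
    and "\<And>t. integrable P (\<lambda>p. e t (g p))"
proof -
  interpret PP: prob_space P by (rule P_prob)
  have X: "0 \<le> X" using gb[of 0] by auto
  have eq: "(\<lambda>p. V (g p)) = (\<lambda>p. \<Sum>t. e t (g p))"
    using V_sums gb by (auto simp: sums_iff)
  have m: "(\<lambda>p. V (g p)) \<in> borel_measurable P" unfolding eq by measurable
  show "integrable P (\<lambda>p. V (g p))"
  proof (rule Bochner_Integration.integrable_bound[OF PP.integrable_const[of "(M1 * X + C X) / (1 - \<beta>)"] m])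
    show "AE p in P. norm (V (g p)) \<le> norm ((M1 * X + C X) / (1 - \<beta>))"
    proof (rule AE_I2)
      fix p
      have "\<bar>V (g p)\<bar> \<le> (M1 * g p + C (g p)) / (1 - \<beta>)" using V_bound gb by auto
      also have "\<dots> \<le> (M1 * X + C X) / (1 - \<beta>)"
        using K_mono gb beta1 by (simp add: divide_right_mono)
      moreover have "0 \<le> M1 * X + C X" using M1_nonneg C_nonneg[of X] X by simp
      moreover have "0 < 1 - \<beta>" using beta1 by simp
      ultimately show "norm (V (g p)) \<le> norm ((M1 * X + C X) / (1 - \<beta>))" by simp
    qed
  qed
  show et: "integrable P (\<lambda>p. e t (g p))" for t
  proof (rule Bochner_Integration.integrable_bound[OF PP.integrable_const[of "M1 * X + C X"]])
    show "(\<lambda>p. e t (g p)) \<in> borel_measurable P" by measurable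
    show "AE p in P. norm (e t (g p)) \<le> norm (M1 * X + C X)"
    proof (rule AE_I2)
      fix p
      have "\<bar>e t (g p)\<bar> \<le> \<beta> ^ t * (M1 * g p + C (g p))" using e_bound gb by auto
      also have "\<dots> \<le> 1 * (M1 * X + C X)"
        using K_mono[of "g p" X] gb beta0 beta1 M1_nonneg C_nonneg
        by (intro mult_mono) (auto simp: power_le_one)
      finally show "norm (e t (g p)) \<le> norm (M1 * X + C X)" using M1_nonneg C_nonneg X by simp
    qed
  qed
  show "integrable P (\<lambda>p. Vn n (g p))" for n
    unfolding Vn_def using et by (intro Bochner_Integration.integrable_sum) auto
qed

end



lemma chain:
  fixes F C c :: "real \<Rightarrow> real" and x1 a b :: real
  assumes cc: "continuous_on {0..x1} c"
    and tang: "\<And>a b. 0 \<le> a \<Longrightarrow> a \<le> b \<Longrightarrow> c a * (b - a) \<le> C b - C a"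
    and loc: "\<And>a b. 0 \<le> a \<Longrightarrow> a \<le> b \<Longrightarrow> b \<le> x1 \<Longrightarrow> F b - F a \<le> c b * (b - a)"
    and ab: "0 \<le> a" "a \<le> b" "b \<le> x1"
  shows "F b - F a \<le> C b - C a"
proof (cases "a = b")
  case True then show ?thesis by simp
next
  case False
  then have ab': "a < b" using ab by simp
  have uc: "uniformly_continuous_on {0..x1} c"
    by (rule compact_uniformly_continuous[OF cc compact_Icc])
  show ?thesis
  proof (rule field_le_epsilon)
    fix d :: real assume d: "0 < d"
    define \<epsilon> where "\<epsilon> = d / (b - a)"
    have \<epsilon>: "0 < \<epsilon>" using d ab' by (simp add: \<epsilon>_def)
    obtain \<delta> where \<delta>: "\<delta> > 0"
      and h\<delta>0: "\<forall>u\<in>{0..x1}. \<forall>v\<in>{0..x1}. dist v u < \<delta> \<longrightarrow> dist (c v) (c u) < \<epsilon>"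
      using uc \<epsilon> unfolding uniformly_continuous_on_def by blast
    have h\<delta>: "\<And>u v. u \<in> {0..x1} \<Longrightarrow> v \<in> {0..x1} \<Longrightarrow> dist v u < \<delta> \<Longrightarrow> dist (c v) (c u) < \<epsilon>"
      using h\<delta>0 by blast
    obtain n :: nat where n: "(b - a) / \<delta> < real n" using reals_Archimedean2 by blast
    have "0 < (b - a) / \<delta>" using ab' \<delta> by simp
    then have npos: "0 < real n" using n by linarith
    define h where "h = (b - a) / real n"
    have h0: "0 < h" using ab' npos by (simp add: h_def)
    have "b - a < real n * \<delta>" using n \<delta> by (simp add: divide_less_eq mult.commute)
    then have h\<delta>': "h < \<delta>" using npos by (simp add: h_def divide_less_eq mult.commute)
    define u where "u k = a + real k * h" for k
    have un: "u n = b" using npos by (simp add: u_def h_def)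
    have uSuc: "u (Suc k) = u k + h" for k by (simp add: u_def algebra_simps)
    have ule: "k \<le> n \<Longrightarrow> u k \<le> b" for k
    proof -
      assume "k \<le> n"
      then have "real k * h \<le> real n * h" using h0 by (simp add: mult_right_mono)
      then show ?thesis using un by (simp add: u_def)
    qed
    have uge: "a \<le> u k" for k using h0 by (simp add: u_def)
    have main: "k \<le> n \<Longrightarrow> F (u k) - F a \<le> C (u k) - C a + \<epsilon> * (u k - a)" for k
    proof (induction k)
      case 0 then show ?case by (simp add: u_def)
    next
      case (Suc k)
      have IH: "F (u k) - F a \<le> C (u k) - C a + \<epsilon> * (u k - a)" using Suc by simp
      have b1: "0 \<le> u k" "u k \<le> u (Suc k)" "u (Suc k) \<le> x1"
        using uge[of k] ab h0 ule[OF Suc.prems] uSuc[of k] by auto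
      have l: "F (u (Suc k)) - F (u k) \<le> c (u (Suc k)) * h"
        using loc[OF b1] uSuc[of k] by simp
      have "dist (c (u (Suc k))) (c (u k)) < \<epsilon>"
        using h\<delta>[of "u k" "u (Suc k)"] b1 h0 h\<delta>' uSuc[of k] by (simp add: dist_real_def)
      then have cu: "c (u (Suc k)) \<le> c (u k) + \<epsilon>" by (simp add: dist_real_def)
      have t: "c (u k) * h \<le> C (u (Suc k)) - C (u k)"
        using tang[OF b1(1) b1(2)] uSuc[of k] by simp
      have "c (u (Suc k)) * h \<le> (c (u k) + \<epsilon>) * h" using cu h0 by (simp add: mult_right_mono)
      then show ?case using IH l t uSuc[of k] by (simp add: algebra_simps)
    qed
    have "F b - F a \<le> C b - C a + \<epsilon> * (b - a)" using main[of n] un by simp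
    then show "F b - F a \<le> C b - C a + d" using ab' by (simp add: \<epsilon>_def)
  qed
qed

context pol_model
begin

lemma pol_measP[measurable]: "(\<lambda>p. pol x p) \<in> borel_measurable P"
  by measurable

lemma Vn_rec:
  assumes x: "0 \<le> x"
  shows "Vn (Suc n) x = (\<integral>p. (p * (x - pol x p) - C (pol x p) + \<beta> * Vn n (pol x p)) \<partial>P)"
proof -
  have gb: "\<And>p. 0 \<le> pol x p \<and> pol x p \<le> x" using pol_bounds[OF x] by auto
  note VC = V_comp[OF pol_measP gb]
  have "Vn (Suc n) x = e 0 x + (\<Sum>t<n. e (Suc t) x)"
    unfolding Vn_def by (rule sum.lessThan_Suc_shift)
  also have "(\<Sum>t<n. e (Suc t) x) = \<beta> * (\<Sum>t<n. \<integral>p. e t (pol x p) \<partial>P)"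
    using e_Suc(1)[OF x] by (simp add: sum_distrib_left)
  also have "(\<Sum>t<n. \<integral>p. e t (pol x p) \<partial>P) = (\<integral>p. Vn n (pol x p) \<partial>P)"
    unfolding Vn_def using VC(3) by (simp add: Bochner_Integration.integral_sum)
  also have "e 0 x + \<beta> * (\<integral>p. Vn n (pol x p) \<partial>P)
      = (\<integral>p. (p * (x - pol x p) - C (pol x p)) \<partial>P) + (\<integral>p. \<beta> * Vn n (pol x p) \<partial>P)"
    using e_0[OF x] by simp
  also have "\<dots> = (\<integral>p. (p * (x - pol x p) - C (pol x p) + \<beta> * Vn n (pol x p)) \<partial>P)"
    using r0_integrable[OF x] VC(2) by (intro Bochner_Integration.integral_add[symmetric] integrable_mult_right) auto
  finally show ?thesis .
qed

lemma V_bellman: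
  assumes x: "0 \<le> x"
  shows "V x = (\<integral>p. (p * (x - pol x p) - C (pol x p) + \<beta> * V (pol x p)) \<partial>P)"
proof -
  interpret PP: prob_space P by (rule P_prob)
  have gb: "\<And>p. 0 \<le> pol x p \<and> pol x p \<le> x" using pol_bounds[OF x] by auto
  note VC = V_comp[OF pol_measP gb]
  let ?K = "M1 * x + C x"
  have eb: "\<bar>e t (pol x p)\<bar> \<le> \<beta> ^ t * ?K" for t p
  proof -
    have "\<bar>e t (pol x p)\<bar> \<le> \<beta> ^ t * (M1 * pol x p + C (pol x p))" using e_bound gb by auto
    also have "\<dots> \<le> \<beta> ^ t * ?K" using K_mono[of "pol x p" x] gb beta0
      by (intro mult_left_mono) auto
    finally show ?thesis .
  qed
  have SI: "(\<integral>p. (\<Sum>t. e t (pol x p)) \<partial>P) = (\<Sum>t. \<integral>p. e t (pol x p) \<partial>P)"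
    and SS: "summable (\<lambda>t. \<integral>p. e t (pol x p) \<partial>P)"
  proof -
    have i: "\<And>t. integrable P (\<lambda>p. e t (pol x p))" by (rule VC(3))
    have s: "AE p in P. summable (\<lambda>t. norm (e t (pol x p)))"
      by (intro AE_I2 summable_comparison_test'[OF geo_summ[of ?K], where N=0]) (use eb in auto)
    have ib: "(\<integral>p. norm (e t (pol x p)) \<partial>P) \<le> \<beta> ^ t * ?K" for t
    proof -
      have "(\<integral>p. norm (e t (pol x p)) \<partial>P) \<le> (\<integral>p. \<beta> ^ t * ?K \<partial>P)"
        using i by (intro integral_mono) (auto simp: eb)
      then show ?thesis by (simp add: PP.prob_space)
    qed
    have ib2: "norm (\<integral>p. norm (e t (pol x p)) \<partial>P) \<le> \<beta> ^ t * ?K" for t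
    proof -
      have "0 \<le> (\<integral>p. norm (e t (pol x p)) \<partial>P)" by (rule Bochner_Integration.integral_nonneg) simp
      then show ?thesis using ib[of t] by simp
    qed
    have s2: "summable (\<lambda>t. \<integral>p. norm (e t (pol x p)) \<partial>P)"
      by (rule summable_comparison_test'[OF geo_summ[of ?K], where N=0]) (rule ib2)
    show "(\<integral>p. (\<Sum>t. e t (pol x p)) \<partial>P) = (\<Sum>t. \<integral>p. e t (pol x p) \<partial>P)"
      by (rule integral_suminf[OF i s s2])
    show "summable (\<lambda>t. \<integral>p. e t (pol x p) \<partial>P)"
      by (rule summable_integral[OF i s s2])
  qed
  have Veq: "V (pol x p) = (\<Sum>t. e t (pol x p))" for p
    using V_sums[of "pol x p"] gb by (simp add: sums_iff)
  have Vs: "summable (\<lambda>t. e t x)" "V x = (\<Sum>t. e t x)" using V_sums[OF x] by (auto simp: sums_iff)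
  have "V x = e 0 x + (\<Sum>t. e (Suc t) x)"
    using suminf_split_head[OF Vs(1)] Vs(2) by simp
  also have "(\<Sum>t. e (Suc t) x) = (\<Sum>t. \<beta> * (\<integral>p. e t (pol x p) \<partial>P))"
    using e_Suc(1)[OF x] by simp
  also have "\<dots> = \<beta> * (\<Sum>t. \<integral>p. e t (pol x p) \<partial>P)"
    by (rule suminf_mult[OF SS])
  also have "(\<Sum>t. \<integral>p. e t (pol x p) \<partial>P) = (\<integral>p. V (pol x p) \<partial>P)"
    unfolding Veq SI ..
  also have "e 0 x + \<beta> * (\<integral>p. V (pol x p) \<partial>P)
      = (\<integral>p. (p * (x - pol x p) - C (pol x p)) \<partial>P) + (\<integral>p. \<beta> * V (pol x p) \<partial>P)"
    using e_0[OF x] by simp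
  also have "\<dots> = (\<integral>p. (p * (x - pol x p) - C (pol x p) + \<beta> * V (pol x p)) \<partial>P)"
    using r0_integrable[OF x] VC(1) by (intro Bochner_Integration.integral_add[symmetric] integrable_mult_right) auto
  finally show ?thesis .
qed

lemma W_mono:
  fixes c :: "real \<Rightarrow> real" and x1 :: real
  assumes AEnn: "AE p in P. 0 \<le> p"
    and cA: "\<And>b. 0 < b \<Longrightarrow> b \<le> x1 \<Longrightarrow> \<beta> * (\<integral>p. p * indicator {q. T q < b} p \<partial>P) \<le> c b"
    and tang: "\<And>a b. 0 \<le> a \<Longrightarrow> a \<le> b \<Longrightarrow> c a * (b - a) \<le> C b - C a"
    and cc: "continuous_on {0..x1} c"
    and ab: "0 \<le> a" "a \<le> b" "b \<le> x1"
  shows "\<beta> * (V b - V a) \<le> C b - C a"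
proof -
  interpret PP: prob_space P by (rule P_prob)
  have Hn: "\<forall>a b. 0 \<le> a \<longrightarrow> a \<le> b \<longrightarrow> b \<le> x1 \<longrightarrow> \<beta> * (Vn n b - Vn n a) \<le> C b - C a" for n
  proof (induction n)
    case 0 then show ?case using C_mono by (simp add: Vn_def monoD)
  next
    case (Suc n)
    define g where "g y p = p * (y - pol y p) - C (pol y p) + \<beta> * Vn n (pol y p)" for y p
    have gi: "0 \<le> y \<Longrightarrow> integrable P (g y)" for y
    proof -
      assume y: "0 \<le> y"
      have gb: "\<And>p. 0 \<le> pol y p \<and> pol y p \<le> y" using pol_bounds[OF y] by auto
      show ?thesis unfolding g_def
        using r0_integrable[OF y] V_comp(2)[OF pol_measP gb]
        by (intro Bochner_Integration.integrable_add integrable_mult_right) auto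
    qed
    have Ai: "integrable P (\<lambda>p. p * indicator {q. T q < b} p)" for b
    proof (rule Bochner_Integration.integrable_bound[OF P_int_abs])
      show "(\<lambda>p. p * indicator {q. T q < b} p) \<in> borel_measurable P" by measurable
      show "AE p in P. norm (p * indicator {q. T q < b} p) \<le> norm \<bar>p\<bar>"
        by (intro AE_I2) (auto simp: indicator_def)
    qed
    have loc: "\<beta> * Vn (Suc n) b - \<beta> * Vn (Suc n) a \<le> c b * (b - a)"
      if ab: "0 \<le> a" "a \<le> b" "b \<le> x1" for a b
    proof (cases "a = b")
      case True then show ?thesis by simp
    next
      case False
      then have ab': "a < b" using ab by simp
      have pw: "g b p - g a p \<le> (b - a) * (p * indicator {q. T q < b} p)" if p: "0 \<le> p" for p
      proof (cases "b \<le> T p")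
        case True
        then have "pol b p = b" "pol a p = a" using ab' by (auto simp: pol_def)
        moreover have "\<beta> * (Vn n b - Vn n a) \<le> C b - C a" by (rule Suc.IH[rule_format, OF ab])
        ultimately show ?thesis using True by (simp add: g_def indicator_def algebra_simps)
      next
        case False
        then have Tb: "T p < b" by simp
        show ?thesis
        proof (cases "T p \<le> a")
          case True
          then have "pol b p = T p" "pol a p = T p" using Tb by (auto simp: pol_def)
          then show ?thesis using Tb by (simp add: g_def indicator_def algebra_simps)
        next
          case False
          then have "pol b p = T p" "pol a p = a" using Tb by (auto simp: pol_def)
          moreover have "\<beta> * (Vn n (T p) - Vn n a) \<le> C (T p) - C a"
            using Suc.IH ab False Tb by auto
          moreover have "p * (b - T p) \<le> p * (b - a)" using False p by (simp add: mult_left_mono)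
          ultimately show ?thesis using Tb by (simp add: g_def indicator_def algebra_simps)
        qed
      qed
      have "Vn (Suc n) b - Vn (Suc n) a = (\<integral>p. g b p \<partial>P) - (\<integral>p. g a p \<partial>P)"
        using Vn_rec[of b n] Vn_rec[of a n] ab by (simp add: g_def)
      also have "\<dots> = (\<integral>p. (g b p - g a p) \<partial>P)"
        using gi ab by (intro Bochner_Integration.integral_diff[symmetric]) auto
      also have "\<dots> \<le> (\<integral>p. (b - a) * (p * indicator {q. T q < b} p) \<partial>P)"
      proof (rule integral_mono_AE)
        show "integrable P (\<lambda>p. g b p - g a p)" using gi ab by auto
        show "integrable P (\<lambda>p. (b - a) * (p * indicator {q. T q < b} p))" using Ai by auto
        show "AE p in P. g b p - g a p \<le> (b - a) * (p * indicator {q. T q < b} p)"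
          using AEnn by eventually_elim (rule pw)
      qed
      also have "\<dots> = (b - a) * (\<integral>p. p * indicator {q. T q < b} p \<partial>P)" by simp
      finally have "Vn (Suc n) b - Vn (Suc n) a \<le> (b - a) * (\<integral>p. p * indicator {q. T q < b} p \<partial>P)" .
      then have "\<beta> * (Vn (Suc n) b - Vn (Suc n) a) \<le> \<beta> * ((b - a) * (\<integral>p. p * indicator {q. T q < b} p \<partial>P))"
        using beta0 by (intro mult_left_mono) auto
      also have "\<dots> = (b - a) * (\<beta> * (\<integral>p. p * indicator {q. T q < b} p \<partial>P))" by simp
      also have "\<dots> \<le> (b - a) * c b"
        using cA[of b] ab ab' by (intro mult_left_mono) auto
      finally show ?thesis by (simp add: algebra_simps)
    qed
    show ?case
    proof (intro allI impI)
      fix a b :: real assume ab: "0 \<le> a" "a \<le> b" "b \<le> x1"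
      have "\<beta> * Vn (Suc n) b - \<beta> * Vn (Suc n) a \<le> C b - C a"
      proof (rule chain[OF cc tang, where F="\<lambda>y. \<beta> * Vn (Suc n) y"])
        show "\<And>a b. 0 \<le> a \<Longrightarrow> a \<le> b \<Longrightarrow> b \<le> x1 \<Longrightarrow>
            \<beta> * Vn (Suc n) b - \<beta> * Vn (Suc n) a \<le> c b * (b - a)" by (rule loc)
      qed (use ab in auto)
      then show "\<beta> * (Vn (Suc n) b - Vn (Suc n) a) \<le> C b - C a" by (simp add: algebra_simps)
    qed
  qed
  have lim: "(\<lambda>n. \<beta> * (Vn n b - Vn n a)) \<longlonglongrightarrow> \<beta> * (V b - V a)"
    using Vn_tendsto[of b] Vn_tendsto[of a] ab by (intro tendsto_intros) auto
  show ?thesis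
  proof (rule LIMSEQ_le_const2[OF lim])
    show "\<exists>N. \<forall>n\<ge>N. \<beta> * (Vn n b - Vn n a) \<le> C b - C a"
    proof (intro exI[of _ 0] allI impI)
      fix n :: nat
      show "\<beta> * (Vn n b - Vn n a) \<le> C b - C a" by (rule Hn[of n, rule_format, OF ab])
    qed
  qed
qed

end



lemma cinv_facts:
  fixes C c :: "real \<Rightarrow> real"
  assumes cv: "strict_convex_on {0..} C"
    and D: "\<forall>x\<ge>0. (C has_real_derivative c x) (at x within {0..})"
    and cc: "continuous_on {0..} c"
    and cl: "filterlim c at_top at_top"
  shows "\<And>v. c 0 \<le> v \<Longrightarrow> 0 \<le> cinv c v \<and> c (cinv c v) = v"
    and "\<And>x. 0 \<le> x \<Longrightarrow> cinv c (c x) = x"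
    and "\<And>v w. c 0 \<le> v \<Longrightarrow> v \<le> w \<Longrightarrow> cinv c v \<le> cinv c w"
    and "\<And>x y. 0 \<le> x \<Longrightarrow> x \<le> y \<Longrightarrow> c x \<le> c y"
    and "\<And>x. 0 < x \<Longrightarrow> c 0 < c x"
proof -
  have sm: "\<And>a b. 0 \<le> a \<Longrightarrow> a < b \<Longrightarrow> c a < c b" using c_strict_mono[OF cv D cc] by blast
  show mono: "\<And>x y. 0 \<le> x \<Longrightarrow> x \<le> y \<Longrightarrow> c x \<le> c y"
  proof -
    fix x y :: real assume "0 \<le> x" "x \<le> y"
    then show "c x \<le> c y" using sm[of x y] by (cases "x = y") auto
  qed
  show "\<And>x. 0 < x \<Longrightarrow> c 0 < c x" using sm by simp
  have inj: "inj_on c {0..}"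
  proof (rule inj_onI)
    fix x y :: real assume xy: "x \<in> {0..}" "y \<in> {0..}" "c x = c y"
    show "x = y"
    proof (rule ccontr)
      assume "x \<noteq> y"
      then have "x < y \<or> y < x" by linarith
      then show False using sm[of x y] sm[of y x] xy by auto
    qed
  qed
  have rng: "v \<in> c ` {0..}" if v: "c 0 \<le> v" for v
  proof -
    have "eventually (\<lambda>x. v \<le> c x) at_top" using cl by (simp add: filterlim_at_top)
    then obtain X where X: "\<And>x. X \<le> x \<Longrightarrow> v \<le> c x" by (auto simp: eventually_at_top_linorder)
    define Y where "Y = max 0 X"
    have "v \<le> c Y" using X by (simp add: Y_def)
    moreover have "continuous_on {0..Y} c" using cc by (rule continuous_on_subset) auto
    ultimately obtain x where "0 \<le> x" "x \<le> Y" "c x = v"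
      using IVT'[of c 0 v Y] v by (auto simp: Y_def)
    then show ?thesis by auto
  qed
  show ci: "\<And>v. c 0 \<le> v \<Longrightarrow> 0 \<le> cinv c v \<and> c (cinv c v) = v"
  proof -
    fix v :: real assume "c 0 \<le> v"
    then have v: "v \<in> c ` {0..}" by (rule rng)
    have "inv_into {0..} c v \<in> {0..}" by (rule inv_into_into[OF v])
    moreover have "c (inv_into {0..} c v) = v" by (rule f_inv_into_f[OF v])
    ultimately show "0 \<le> cinv c v \<and> c (cinv c v) = v" by (simp add: cinv_def)
  qed
  show cc2: "\<And>x. 0 \<le> x \<Longrightarrow> cinv c (c x) = x"
    unfolding cinv_def using inj by (simp add: inv_into_f_f)
  show "\<And>v w. c 0 \<le> v \<Longrightarrow> v \<le> w \<Longrightarrow> cinv c v \<le> cinv c w"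
  proof (rule ccontr)
    fix v w assume vw: "c 0 \<le> v" "v \<le> w" "\<not> cinv c v \<le> cinv c w"
    then have "c (cinv c w) < c (cinv c v)" using sm[of "cinv c w" "cinv c v"] ci[of w] by auto
    then show False using ci[of v] ci[of w] vw by simp
  qed
qed


lemma policy_min:
  fixes c :: "real \<Rightarrow> real"
  assumes ci: "\<And>v. c 0 \<le> v \<Longrightarrow> 0 \<le> cinv c v \<and> c (cinv c v) = v"
    and cc2: "\<And>x. 0 \<le> x \<Longrightarrow> cinv c (c x) = x"
    and cm: "\<And>v w. c 0 \<le> v \<Longrightarrow> v \<le> w \<Longrightarrow> cinv c v \<le> cinv c w"
    and mono: "\<And>x y. 0 \<le> x \<Longrightarrow> x \<le> y \<Longrightarrow> c x \<le> c y"
    and x: "0 \<le> x"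
  shows "cinv c (proj (c 0) (c x) z) = min x (cinv c (max (c 0) z))"
proof -
  have c0x: "c 0 \<le> c x" using mono x by simp
  have eq: "proj (c 0) (c x) z = min (c x) (max (c 0) z)"
    unfolding proj_def using c0x by (simp add: max_def min_def)
  show ?thesis
  proof (cases "max (c 0) z \<le> c x")
    case True
    have p: "proj (c 0) (c x) z = max (c 0) z" using eq True by simp
    have "cinv c (max (c 0) z) \<le> x" using cm[of "max (c 0) z" "c x"] cc2[OF x] True by simp
    then show ?thesis using p by (simp add: min_absorb2)
  next
    case False
    have p: "proj (c 0) (c x) z = c x" using eq False by simp
    have "x \<le> cinv c (max (c 0) z)" using cm[of "c x" "max (c 0) z"] cc2[OF x] c0x False by simp
    then show ?thesis using p cc2[OF x] by (simp add: min_absorb1)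
  qed
qed

lemma zS_strict:
  fixes \<beta> :: real and ps :: "nat \<Rightarrow> real"
  assumes "0 < \<beta>" "\<beta> < 1" "p < q"
  shows "\<beta> * ((\<Sum>i<N. pos (ps i - q)) / real N) - (1 - \<beta>) * q
       < \<beta> * ((\<Sum>i<N. pos (ps i - p)) / real N) - (1 - \<beta>) * p"
proof -
  have "(\<Sum>i<N. pos (ps i - q)) \<le> (\<Sum>i<N. pos (ps i - p))"
    using assms by (intro sum_mono) (simp add: pos_def)
  then have "(\<Sum>i<N. pos (ps i - q)) / real N \<le> (\<Sum>i<N. pos (ps i - p)) / real N"
    by (simp add: divide_right_mono)
  then have "\<beta> * ((\<Sum>i<N. pos (ps i - q)) / real N) \<le> \<beta> * ((\<Sum>i<N. pos (ps i - p)) / real N)"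
    by (rule mult_left_mono) (use assms in auto)
  moreover have "(1 - \<beta>) * p < (1 - \<beta>) * q" using assms by simp
  ultimately show ?thesis by linarith
qed

lemma zM_le_zS:
  fixes ps :: "nat \<Rightarrow> real"
  assumes "0 < N" "0 < \<beta>"
  shows "\<beta> * pos (mu N ps - p) - (1 - \<beta>) * p \<le> \<beta> * ((\<Sum>i<N. pos (ps i - p)) / real N) - (1 - \<beta>) * p"
proof -
  have "mu N ps - p = (\<Sum>i<N. (ps i - p)) / real N"
    using assms by (simp add: mu_def sum_subtractf field_simps)
  also have "\<dots> \<le> (\<Sum>i<N. pos (ps i - p)) / real N"
    by (intro divide_right_mono sum_mono) (auto simp: pos_def)
  finally have 1: "mu N ps - p \<le> (\<Sum>i<N. pos (ps i - p)) / real N" .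
  have 2: "0 \<le> (\<Sum>i<N. pos (ps i - p)) / real N"
    by (intro divide_nonneg_nonneg sum_nonneg) (auto simp: pos_def)
  have "pos (mu N ps - p) \<le> (\<Sum>i<N. pos (ps i - p)) / real N"
    using 1 2 by (simp add: pos_def)
  then have "\<beta> * pos (mu N ps - p) \<le> \<beta> * ((\<Sum>i<N. pos (ps i - p)) / real N)"
    by (rule mult_left_mono) (use assms in auto)
  then show ?thesis by linarith
qed

theorem proposition3:
  fixes \<beta> x1 :: real and C c :: "real \<Rightarrow> real" and P :: "real measure"
    and N :: nat and ps :: "nat \<Rightarrow> real"
  assumes beta: "0 < \<beta>" "\<beta> < 1"
    and x1: "0 \<le> x1"
    and C_nonneg: "\<forall>x\<ge>0. C x \<ge> 0"
    and C_incr: "mono_on {0..} C"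
    and C_sconv: "strict_convex_on {0..} C"
    and C_deriv: "\<forall>x\<ge>0. (C has_real_derivative c x) (at x within {0..})"
    and c_cont: "continuous_on {0..} c"
    and c_lim: "filterlim c at_top at_top"
    and P_prob: "prob_space P"
    and P_sets: "sets P = sets borel"
    and P_nonneg: "AE p in P. 0 \<le> p"
    and P_mean: "integrable P (\<lambda>p. p)"
    and P_noatom: "\<forall>p. measure P {p} = 0"
    and N_pos: "0 < N"
    and ps_nonneg: "\<forall>i<N. 0 \<le> ps i"
    and cond: "\<forall>x\<in>{0..x1}. c x \<ge> \<beta> * (\<integral>p. p * indicator {q. ereal q > pstar (y_S c \<beta> N ps) x} p \<partial>P)"
  shows "\<forall>x\<in>{0..x1}. Vbar P \<beta> C (y_M c \<beta> N ps) x \<ge> Vbar P \<beta> C (y_S c \<beta> N ps) x"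
proof -
  note CF = cinv_facts[OF C_sconv C_deriv c_cont c_lim]
  note ci = CF(1) and cc2 = CF(2) and cm = CF(3) and cmono = CF(4) and cpos = CF(5)
  interpret PP: prob_space P by (rule P_prob)
  define zS where "zS p = \<beta> * ((\<Sum>i<N. pos (ps i - p)) / real N) - (1 - \<beta>) * p" for p
  define zM where "zM p = \<beta> * pos (mu N ps - p) - (1 - \<beta>) * p" for p
  define G where "G v = cinv c (max (c 0) v)" for v
  define TS where "TS p = G (zS p)" for p
  define TM where "TM p = G (zM p)" for p
  define C' where "C' x = C (max 0 x)" for x
  have Gmono: "mono G" unfolding G_def mono_def by (intro allI impI cm) auto
  have G_meas[measurable]: "G \<in> borel_measurable borel" by (rule borel_measurable_mono[OF Gmono])
  have Gnn: "0 \<le> G v" for v using ci[of "max (c 0) v"] by (simp add: G_def)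
  have zS_meas[measurable]: "zS \<in> borel_measurable borel" unfolding zS_def pos_def by measurable
  have zM_meas[measurable]: "zM \<in> borel_measurable borel" unfolding zM_def pos_def by measurable
  have C'_mono: "mono C'" unfolding C'_def mono_def
    by (intro allI impI mono_onD[OF C_incr]) auto
  have C'_meas: "C' \<in> borel_measurable borel" by (rule borel_measurable_mono[OF C'_mono])
  have C'_nn: "0 \<le> C' x" for x using C_nonneg by (simp add: C'_def)
  have TS_meas[measurable]: "TS \<in> borel_measurable borel" unfolding TS_def by measurable
  have TM_meas[measurable]: "TM \<in> borel_measurable borel" unfolding TM_def by measurable
  have TSnn: "0 \<le> TS p" for p unfolding TS_def by (rule Gnn)
  have TMnn: "0 \<le> TM p" for p unfolding TM_def by (rule Gnn)
  interpret S: pol_model P \<beta> C' TS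
    by (rule pol_model.intro[OF P_prob P_sets beta(1) beta(2) C'_nn C'_mono C'_meas P_mean TS_meas TSnn])
  interpret M: pol_model P \<beta> C' TM
    by (rule pol_model.intro[OF P_prob P_sets beta(1) beta(2) C'_nn C'_mono C'_meas P_mean TM_meas TMnn])
  have ySeq: "y_S c \<beta> N ps x p = S.pol x p" if "0 \<le> x" for x p
    unfolding y_S_def S.pol_def TS_def G_def zS_def using policy_min[OF ci cc2 cm cmono that] by simp
  have yMeq: "y_M c \<beta> N ps x p = M.pol x p" if "0 \<le> x" for x p
    unfolding y_M_def M.pol_def TM_def G_def zM_def using policy_min[OF ci cc2 cm cmono that] by simp
  have ipS: "inv_path (y_S c \<beta> N ps) x \<omega> t = inv_path S.pol x \<omega> t" if x: "0 \<le> x" for x \<omega> t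
  proof (induction t)
    case (Suc t) then show ?case using ySeq S.path_bounds[OF x, of \<omega> t] by simp
  qed simp
  have ipM: "inv_path (y_M c \<beta> N ps) x \<omega> t = inv_path M.pol x \<omega> t" if x: "0 \<le> x" for x \<omega> t
  proof (induction t)
    case (Suc t) then show ?case using yMeq M.path_bounds[OF x, of \<omega> t] by simp
  qed simp
  have VS: "Vbar P \<beta> C (y_S c \<beta> N ps) x = S.V x" if x: "0 \<le> x" for x
  proof -
    have h: "C (max 0 (inv_path S.pol x \<omega> t)) = C (inv_path S.pol x \<omega> t)" for \<omega> t
      using S.path_bounds[OF x, of \<omega> t] by simp
    show ?thesis unfolding S.V_def Vbar_def C'_def h ipS[OF x] ..
  qed
  have VM: "Vbar P \<beta> C (y_M c \<beta> N ps) x = M.V x" if x: "0 \<le> x" for x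
  proof -
    have h: "C (max 0 (inv_path M.pol x \<omega> t)) = C (inv_path M.pol x \<omega> t)" for \<omega> t
      using M.path_bounds[OF x, of \<omega> t] by simp
    show ?thesis unfolding M.V_def Vbar_def C'_def h ipM[OF x] ..
  qed
  have tgt: "target (y_S c \<beta> N ps) p = TS p" for p
  proof -
    have "eventually (\<lambda>x. y_S c \<beta> N ps x p = TS p) at_top"
      using eventually_ge_at_top[of "TS p"]
    proof eventually_elim
      case (elim x)
      then have "0 \<le> x" using Gnn[of "zS p"] by (simp add: TS_def)
      then show ?case using elim ySeq by (simp add: S.pol_def)
    qed
    then have "((\<lambda>x. y_S c \<beta> N ps x p) \<longlongrightarrow> TS p) at_top" by (rule tendsto_eventually)
    then show ?thesis unfolding target_def by (intro tendsto_Lim) simp_all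
  qed
  have TSlt: "zS q < c x" if "TS q < x" "0 \<le> x" for q x
  proof (rule ccontr)
    assume "\<not> zS q < c x"
    then have "c x \<le> max (c 0) (zS q)" by simp
    then have "cinv c (c x) \<le> G (zS q)"
      using cm[of "c x" "max (c 0) (zS q)"] cmono[of 0 x] that unfolding G_def by simp
    then show False using cc2[of x] that by (simp add: TS_def)
  qed
  have TSeq: "zS p = c x" if "TS p = x" "0 < x" for p x
  proof -
    have "c (TS p) = max (c 0) (zS p)" using ci[of "max (c 0) (zS p)"] unfolding TS_def G_def by simp
    then have "max (c 0) (zS p) = c x" using that by simp
    moreover have "c 0 < c x" using cpos that by simp
    ultimately show ?thesis by (simp add: max_def split: if_splits)
  qed
  have zS_le: "p \<le> q \<Longrightarrow> zS q \<le> zS p" for p q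
    using zS_strict[OF beta, of p q ps N] unfolding zS_def by (cases "p = q") auto
  have incl: "{q. TS q < x} \<subseteq> {q. ereal q > pstar (y_S c \<beta> N ps) x}" if x: "0 < x" for x
  proof
    fix q assume "q \<in> {q. TS q < x}"
    then have q: "zS q < c x" using TSlt x by simp
    define Z where "Z = {p. TS p = x}"
    have Zs: "{ereal p | p. target (y_S c \<beta> N ps) p = x} = ereal ` Z"
      by (auto simp: Z_def tgt)
    have pstar_eq: "pstar (y_S c \<beta> N ps) x = Sup (ereal ` Z)"
      unfolding pstar_def Zs ..
    have Zlt: "p < q" if "p \<in> Z" for p
    proof (rule ccontr)
      assume "\<not> p < q"
      then have "zS p \<le> zS q" using zS_le[of q p] by simp
      moreover have "zS p = c x" using that TSeq x by (simp add: Z_def)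
      ultimately show False using q by simp
    qed
    have Zuniq: "p1 = p2" if "p1 \<in> Z" "p2 \<in> Z" for p1 p2
    proof (rule ccontr)
      assume ne: "p1 \<noteq> p2"
      have e: "zS p1 = c x" "zS p2 = c x" using that TSeq x by (auto simp: Z_def)
      have "zS p1 \<noteq> zS p2"
      proof (cases "p1 < p2")
        case True then show ?thesis
          using zS_strict[OF beta True, of ps N] unfolding zS_def by simp
      next
        case False then have "p2 < p1" using ne by simp
        then show ?thesis using zS_strict[OF beta, of p2 p1 ps N] unfolding zS_def by simp
      qed
      then show False using e by simp
    qed
    show "q \<in> {q. ereal q > pstar (y_S c \<beta> N ps) x}"
    proof (cases "Z = {}")
      case True then show ?thesis by (simp add: pstar_eq bot_ereal_def)
    next
      case False
      then obtain p0 where p0: "p0 \<in> Z" by blast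
      then have "Z = {p0}" using Zuniq by blast
      then show ?thesis using Zlt[OF p0] by (simp add: pstar_eq)
    qed
  qed
  have intind: "integrable P (\<lambda>p. p * indicator A p)" if A: "A \<in> sets borel" for A
  proof (rule Bochner_Integration.integrable_bound[OF S.P_int_abs])
    have [measurable]: "A \<in> sets P" using A P_sets by simp
    show "(\<lambda>p. p * indicator A p) \<in> borel_measurable P" by measurable
    show "AE p in P. norm (p * indicator A p) \<le> norm \<bar>p\<bar>"
      by (intro AE_I2) (auto simp: indicator_def)
  qed
  have ereal_set: "{q. e < ereal q} \<in> sets borel" for e :: ereal
    by measurable
  have cA: "\<beta> * (\<integral>p. p * indicator {q. TS q < b} p \<partial>P) \<le> c b" if b: "0 < b" "b \<le> x1" for b
  proof -
    have "(\<integral>p. p * indicator {q. TS q < b} p \<partial>P)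
        \<le> (\<integral>p. p * indicator {q. ereal q > pstar (y_S c \<beta> N ps) b} p \<partial>P)"
    proof (rule integral_mono_AE)
      show "integrable P (\<lambda>p. p * indicator {q. TS q < b} p)" by (rule intind) measurable
      show "integrable P (\<lambda>p. p * indicator {q. ereal q > pstar (y_S c \<beta> N ps) b} p)"
        by (rule intind[OF ereal_set])
      show "AE p in P. p * indicator {q. TS q < b} p \<le> p * indicator {q. ereal q > pstar (y_S c \<beta> N ps) b} p"
        using P_nonneg
      proof eventually_elim
        case (elim p)
        then show ?case using incl[OF b(1)] by (auto simp: indicator_def)
      qed
    qed
    then have "\<beta> * (\<integral>p. p * indicator {q. TS q < b} p \<partial>P)
        \<le> \<beta> * (\<integral>p. p * indicator {q. ereal q > pstar (y_S c \<beta> N ps) b} p \<partial>P)"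
      using beta by (intro mult_left_mono) auto
    also have "\<dots> \<le> c b" using cond b by auto
    finally show ?thesis .
  qed
  have tang': "c a * (b - a) \<le> C' b - C' a" if "0 \<le> a" "a \<le> b" for a b
    using tangent[OF C_sconv C_deriv c_cont, of a b] that by (simp add: C'_def)
  have cc': "continuous_on {0..x1} c" by (rule continuous_on_subset[OF c_cont]) auto
  have Wm: "\<beta> * (S.V b - S.V a) \<le> C' b - C' a" if "0 \<le> a" "a \<le> b" "b \<le> x1" for a b
    by (rule S.W_mono[OF P_nonneg cA tang' cc' that]) auto
  have TMS: "TM p \<le> TS p" for p
    unfolding TM_def TS_def zM_def zS_def using zM_le_zS[OF N_pos beta(1), of ps p]
    by (intro monoD[OF Gmono])
  define B where "B = (S.M1 * x1 + C' x1) / (1 - \<beta>)"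
  have VSb: "\<bar>S.V y\<bar> \<le> B" if "0 \<le> y" "y \<le> x1" for y
  proof -
    have "\<bar>S.V y\<bar> \<le> (S.M1 * y + C' y) / (1 - \<beta>)" using S.V_bound that by simp
    also have "\<dots> \<le> B" unfolding B_def using S.K_mono[OF that] beta by (simp add: divide_right_mono)
    finally show ?thesis .
  qed
  have VMb: "\<bar>M.V y\<bar> \<le> B" if "0 \<le> y" "y \<le> x1" for y
  proof -
    have "\<bar>M.V y\<bar> \<le> (M.M1 * y + C' y) / (1 - \<beta>)" using M.V_bound that by simp
    also have "\<dots> \<le> B" unfolding B_def using M.K_mono[OF that] beta by (simp add: divide_right_mono)
    finally show ?thesis .
  qed
  define D where "D y = M.V y - S.V y" for y
  have Db: "- 2 * B \<le> D y" if "y \<in> {0..x1}" for y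
    using VSb[of y] VMb[of y] that by (auto simp: D_def abs_le_iff)
  have step: "\<beta> * (\<integral>p. D (M.pol x p) \<partial>P) \<le> D x" if x: "0 \<le> x" "x \<le> x1" for x
  proof -
    have gbM: "\<And>p. 0 \<le> M.pol x p \<and> M.pol x p \<le> x" using M.pol_bounds[OF x(1)] by auto
    have gbS: "\<And>p. 0 \<le> S.pol x p \<and> S.pol x p \<le> x" using S.pol_bounds[OF x(1)] by auto
    have ab: "M.pol x p \<le> S.pol x p" for p using TMS[of p] by (auto simp: M.pol_def S.pol_def)
    have i1: "integrable P (\<lambda>p. S.V (M.pol x p))" by (rule S.V_comp(1)[OF M.pol_measP gbM])
    have i2: "integrable P (\<lambda>p. M.V (M.pol x p))" by (rule M.V_comp(1)[OF M.pol_measP gbM])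
    have i3: "integrable P (\<lambda>p. S.V (S.pol x p))" by (rule S.V_comp(1)[OF S.pol_measP gbS])
    have r0M: "integrable P (\<lambda>p. p * (x - M.pol x p) - C' (M.pol x p))" by (rule M.r0_integrable[OF x(1)])
    have r0S: "integrable P (\<lambda>p. p * (x - S.pol x p) - C' (S.pol x p))" by (rule S.r0_integrable[OF x(1)])
    have "S.V x = (\<integral>p. (p * (x - S.pol x p) - C' (S.pol x p) + \<beta> * S.V (S.pol x p)) \<partial>P)"
      by (rule S.V_bellman[OF x(1)])
    also have "\<dots> \<le> (\<integral>p. (p * (x - M.pol x p) - C' (M.pol x p) + \<beta> * S.V (M.pol x p)) \<partial>P)"
    proof (rule integral_mono_AE)
      show "integrable P (\<lambda>p. p * (x - S.pol x p) - C' (S.pol x p) + \<beta> * S.V (S.pol x p))"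
        using r0S i3 by (intro Bochner_Integration.integrable_add integrable_mult_right)
      show "integrable P (\<lambda>p. p * (x - M.pol x p) - C' (M.pol x p) + \<beta> * S.V (M.pol x p))"
        using r0M i1 by (intro Bochner_Integration.integrable_add integrable_mult_right)
      show "AE p in P. p * (x - S.pol x p) - C' (S.pol x p) + \<beta> * S.V (S.pol x p)
          \<le> p * (x - M.pol x p) - C' (M.pol x p) + \<beta> * S.V (M.pol x p)"
        using P_nonneg
      proof eventually_elim
        case (elim p)
        have w: "\<beta> * (S.V (S.pol x p) - S.V (M.pol x p)) \<le> C' (S.pol x p) - C' (M.pol x p)"
          using Wm[of "M.pol x p" "S.pol x p"] gbM[of p] gbS[of p] ab[of p] x by auto
        have "p * (x - S.pol x p) \<le> p * (x - M.pol x p)"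
          using elim ab[of p] by (intro mult_left_mono) auto
        then show ?case using w by (simp add: algebra_simps)
      qed
    qed
    finally have SV: "S.V x \<le> (\<integral>p. (p * (x - M.pol x p) - C' (M.pol x p) + \<beta> * S.V (M.pol x p)) \<partial>P)" .
    have MV: "M.V x = (\<integral>p. (p * (x - M.pol x p) - C' (M.pol x p) + \<beta> * M.V (M.pol x p)) \<partial>P)"
      by (rule M.V_bellman[OF x(1)])
    have "(\<integral>p. (p * (x - M.pol x p) - C' (M.pol x p) + \<beta> * M.V (M.pol x p)) \<partial>P)
        - (\<integral>p. (p * (x - M.pol x p) - C' (M.pol x p) + \<beta> * S.V (M.pol x p)) \<partial>P)
        = (\<integral>p. \<beta> * D (M.pol x p) \<partial>P)"
    proof -
      have "(\<integral>p. (p * (x - M.pol x p) - C' (M.pol x p) + \<beta> * M.V (M.pol x p)) \<partial>P)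
        - (\<integral>p. (p * (x - M.pol x p) - C' (M.pol x p) + \<beta> * S.V (M.pol x p)) \<partial>P)
        = (\<integral>p. ((p * (x - M.pol x p) - C' (M.pol x p) + \<beta> * M.V (M.pol x p))
           - (p * (x - M.pol x p) - C' (M.pol x p) + \<beta> * S.V (M.pol x p))) \<partial>P)"
        using r0M i1 i2
        by (intro Bochner_Integration.integral_diff[symmetric] Bochner_Integration.integrable_add integrable_mult_right)
      also have "\<dots> = (\<integral>p. \<beta> * D (M.pol x p) \<partial>P)"
        by (intro Bochner_Integration.integral_cong) (auto simp: D_def algebra_simps)
      finally show ?thesis .
    qed
    then show ?thesis using SV MV by (simp add: D_def)
  qed
  have ne: "{0..x1} \<noteq> {}" using x1 by simp
  have bdd: "bdd_below (D ` {0..x1})"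
    by (rule bdd_belowI2[where m="- 2 * B"]) (rule Db)
  define m where "m = (INF y\<in>{0..x1}. D y)"
  have mle: "m \<le> D y" if "y \<in> {0..x1}" for y
    unfolding m_def by (rule cINF_lower[OF bdd that])
  have bm: "\<beta> * m \<le> D x" if x: "x \<in> {0..x1}" for x
  proof -
    have x': "0 \<le> x" "x \<le> x1" using x by auto
    have gbM: "\<And>p. 0 \<le> M.pol x p \<and> M.pol x p \<le> x" using M.pol_bounds[OF x'(1)] by auto
    have iD: "integrable P (\<lambda>p. D (M.pol x p))"
      unfolding D_def using S.V_comp(1)[OF M.pol_measP gbM] M.V_comp(1)[OF M.pol_measP gbM] by simp
    have "m = (\<integral>p. m \<partial>P)" by (simp add: PP.prob_space)
    also have "\<dots> \<le> (\<integral>p. D (M.pol x p) \<partial>P)"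
    proof (rule integral_mono[OF _ iD])
      show "integrable P (\<lambda>p. m)" by simp
      show "m \<le> D (M.pol x p)" for p using mle gbM[of p] x' by auto
    qed
    finally have "\<beta> * m \<le> \<beta> * (\<integral>p. D (M.pol x p) \<partial>P)" using beta by (intro mult_left_mono) auto
    also have "\<dots> \<le> D x" by (rule step[OF x'])
    finally show ?thesis .
  qed
  have "\<beta> * m \<le> m" unfolding m_def[symmetric] using bm
    by (subst m_def) (rule cINF_greatest[OF ne])
  then have "(1 - \<beta>) * m \<ge> 0" by (simp add: algebra_simps)
  then have m0: "0 \<le> m" using beta by (simp add: zero_le_mult_iff)
  show ?thesis
  proof
    fix x assume x: "x \<in> {0..x1}"
    have "0 \<le> D x" using m0 mle[OF x] by simp
    then show "Vbar P \<beta> C (y_S c \<beta> N ps) x \<le> Vbar P \<beta> C (y_M c \<beta> N ps) x"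
      using VS VM x by (simp add: D_def)
  qed
qed


end
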